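(* Let $h\ge1$, $\omega=e^{2\pi\mathrm{i}/h}$, and consider walks with steps in $\{0,\pm1,\dots,\pm h\}$. For $k\ge1$ and $n\ge0$, the number of positive walks of length $n$ from the origin to altitude $k$ (walks $0=y_0,\dots,y_n=k$ with $y_i\ge1$ for $1\le i\le n$) and the number of positive meanders of length $n$ (walks $0=y_0,\dots,y_n$ with $y_i\ge1$ for $1\le i\le n$) are respectively $$[z^n]G_{0,k}(z)=\sum_{n_1+\dots+n_h=nh}\ \sum_{i_1+\dots+i_h=k}\ \prod_{j=1}^h\frac{i_j}{n_j}\binom{n_j/h}{n_j-i_j}_{2h+1}\ \omega^{\sum_{j=1}^h(j-1)n_j},$$ $$[z^n]M_{>0}(z)=\sum_{n_1+\dots+n_h=nh}\ \sum_{i_1,\dots,i_h\ge0}\ \prod_{j=1}^h\frac{i_j}{n_j}\binom{n_j/h}{n_j-i_j}_{2h+1}\ \omega^{\sum_{j=1}^h(j-1)n_j},$$ where all $n_j,i_j$ range over nonnegative integers.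
   Context: For real $\alpha$, integer $m\ge1$ and integer $k$, $\binom{\alpha}{k}_m:=[u^k](1+u+\dots+u^{m-1})^{\alpha}$ (formal power series with constant term $1$; $0$ for $k<0$). In the products, the factor $\frac{i}{n}\binom{n/h}{n-i}_{2h+1}$ stands for $[z^n]U^i(z)$, where $U(z)=z+\cdots$ is the power series root of $1-z^h(U^{-h}+\dots+U^{h})=0$; concretely it equals $1$ if $i=n=0$ and $0$ if exactly one of $i,n$ is $0$. *)

theory Defs
  imports Complex_Main "HOL-Computational_Algebra.Formal_Power_Series"
    "HOL-Library.FuncSet" "HOL-Analysis.Infinite_Sum"
begin

(* Polynomial coefficient binom(alpha,k)_m = [u^k] (1 + u + ... + u^(m-1))^alpha,
   the power taken as the formal power series (1+X)^alpha composed with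
   g = u + ... + u^(m-1) (constant term 0). *)
definition gbinom_m :: "real \<Rightarrow> nat \<Rightarrow> int \<Rightarrow> real" where
  "gbinom_m \<alpha> m k =
     (if k < 0 then 0
      else fps_nth (fps_compose (fps_binomial \<alpha>) (\<Sum>j=1..<m. fps_X ^ j)) (nat k))"

definition Ufac :: "nat \<Rightarrow> nat \<Rightarrow> nat \<Rightarrow> complex" where
  "Ufac h i n =
     (if n = 0 then (if i = 0 then 1 else 0)
      else of_nat i / of_nat n *
           complex_of_real (gbinom_m (real n / real h) (2*h+1) (int n - int i)))"

definition omega :: "nat \<Rightarrow> complex" where
  "omega h = exp (2 * pi * \<i> / of_nat h)"

(* walks as lists of steps in {-h..h}; y_i = sum of the first i steps *)
definition pos_walks :: "nat \<Rightarrow> nat \<Rightarrow> int \<Rightarrow> int list set" where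
  "pos_walks h n k = {s. length s = n \<and> set s \<subseteq> {- int h..int h} \<and>
      (\<forall>i\<in>{1..n}. sum_list (take i s) \<ge> 1) \<and> sum_list s = k}"

definition pos_meanders :: "nat \<Rightarrow> nat \<Rightarrow> int list set" where
  "pos_meanders h n = {s. length s = n \<and> set s \<subseteq> {- int h..int h} \<and>
      (\<forall>i\<in>{1..n}. sum_list (take i s) \<ge> 1)}"

definition tuples_sum :: "nat \<Rightarrow> nat \<Rightarrow> (nat \<Rightarrow> nat) set" where
  "tuples_sum h N = {x \<in> {1..h} \<rightarrow>\<^sub>E (UNIV :: nat set). (\<Sum>j=1..h. x j) = N}"

definition term46 :: "nat \<Rightarrow> (nat \<Rightarrow> nat) \<Rightarrow> (nat \<Rightarrow> nat) \<Rightarrow> complex" where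
  "term46 h ns is = (\<Prod>j=1..h. Ufac h (is j) (ns j)) * omega h ^ (\<Sum>j=1..h. (j - 1) * ns j)"

end

theory Submission
  imports Defs "HOL-Computational_Algebra.Formal_Laurent_Series" "HOL-Computational_Algebra.Polynomial_FPS"
    "HOL-Analysis.Complex_Transcendental"
begin
unbundle fps_syntax
unbundle Formal_Laurent_Series.fps_syntax

unbundle fps_syntax
unbundle Formal_Laurent_Series.fps_syntax

definition TS :: "'b set \<Rightarrow> nat \<Rightarrow> ('b \<Rightarrow> nat) set" where
  "TS A N = {x \<in> A \<rightarrow>\<^sub>E (UNIV :: nat set). sum x A = N}"

lemma TS_sub: "finite A \<Longrightarrow> TS A N \<subseteq> A \<rightarrow>\<^sub>E {0..N}"
  by (auto simp: TS_def PiE_def Pi_def intro!: member_le_sum[of _ A _, simplified])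

lemma finite_TS: "finite A \<Longrightarrow> finite (TS A N)"
  by (rule finite_subset[OF TS_sub]) (auto intro: finite_PiE)

lemma fps_prod_nth_TS:
  fixes f :: "'b \<Rightarrow> 'a::comm_ring_1 fps"
  assumes "finite A"
  shows "(\<Prod>j\<in>A. f j) $ N = (\<Sum>x\<in>TS A N. \<Prod>j\<in>A. f j $ x j)"
  using assms
proof (induction A arbitrary: N rule: finite_induct)
  case empty
  have "TS {} N = (if N = 0 then {\<lambda>_. undefined} else {})"
    by (auto simp: TS_def)
  then show ?case by (simp add: TS_def)
next
  case (insert a A)
  have "(\<Prod>j\<in>insert a A. f j) $ N = (f a * (\<Prod>j\<in>A. f j)) $ N"
    using insert by simp
  also have "\<dots> = (\<Sum>i=0..N. f a $ i * (\<Prod>j\<in>A. f j) $ (N - i))"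
    by (simp add: fps_mult_nth)
  also have "\<dots> = (\<Sum>i=0..N. \<Sum>y\<in>TS A (N-i). f a $ i * (\<Prod>j\<in>A. f j $ y j))"
    by (simp add: insert.IH sum_distrib_left)
  also have "\<dots> = (\<Sum>(i,y)\<in>Sigma {0..N} (\<lambda>i. TS A (N-i)). f a $ i * (\<Prod>j\<in>A. f j $ y j))"
    by (rule sum.Sigma) (auto intro: finite_TS insert.hyps)
  also have "\<dots> = (\<Sum>x\<in>TS (insert a A) N. \<Prod>j\<in>insert a A. f j $ x j)"
  proof (rule sum.reindex_bij_witness[where i="\<lambda>x. (x a, restrict x A)" and j="\<lambda>(i,y). y(a:=i)"])
    fix x assume x: "x \<in> TS (insert a A) N"
    then have s: "x a + sum x A = N" using insert.hyps by (simp add: TS_def)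
    show "(case (x a, restrict x A) of (i, y) \<Rightarrow> y(a := i)) = x"
      using x insert.hyps by (auto simp: TS_def PiE_def extensional_def fun_eq_iff)
    have "sum (restrict x A) A = sum x A" by (rule sum.cong) auto
    then show "(x a, restrict x A) \<in> Sigma {0..N} (\<lambda>i. TS A (N - i))"
      using s by (auto simp: TS_def)
  next
    fix p assume p: "p \<in> Sigma {0..N} (\<lambda>i. TS A (N - i))"
    obtain i y where pe: "p = (i,y)" by (cases p)
    have y: "y \<in> A \<rightarrow>\<^sub>E UNIV" "sum y A = N - i" "i \<le> N" using p pe by (auto simp: TS_def)
    have ya: "y a = undefined" using y(1) insert.hyps by (auto simp: PiE_def extensional_def)
    have sy: "sum (y(a:=i)) A = sum y A" using insert.hyps by (intro sum.cong) auto
    show "(case p of (i, y) \<Rightarrow> y(a := i)) \<in> TS (insert a A) N"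
      using y sy insert.hyps by (auto simp: pe TS_def PiE_def extensional_def)
    show "((case p of (i, y) \<Rightarrow> y(a := i)) a, restrict (case p of (i, y) \<Rightarrow> y(a := i)) A) = p"
      using y insert.hyps by (auto simp: pe PiE_def extensional_def fun_eq_iff)
    have "(\<Prod>j\<in>A. f j $ (y(a:=i)) j) = (\<Prod>j\<in>A. f j $ y j)"
      using insert.hyps by (intro prod.cong) auto
    then show "(\<Prod>j\<in>insert a A. f j $ (case p of (i, y) \<Rightarrow> y(a := i)) j) =
          (case p of (i, y) \<Rightarrow> f a $ i * (\<Prod>j\<in>A. f j $ y j))"
      using insert.hyps by (simp add: pe)
  qed
  finally show ?case .
qed


unbundle fps_syntax
unbundle Formal_Laurent_Series.fps_syntax

definition LF :: "'a::field fps \<Rightarrow> 'a fps" where "LF \<phi> = fps_X * inverse \<phi>"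
definition LV :: "'a::field fps \<Rightarrow> 'a fps" where "LV \<phi> = fps_inv (LF \<phi>)"

context
  fixes \<phi> :: "'a::field_char_0 fps"
  assumes phi0: "\<phi> $ 0 = 1"
begin

lemma LF_0: "LF \<phi> $ 0 = 0" by (simp add: LF_def)
lemma LF_1: "LF \<phi> $ 1 = 1"
  by (simp add: LF_def fps_X_mult_nth phi0)

lemma phi_LF: "\<phi> * LF \<phi> = fps_X"
proof -
  have "\<phi> * inverse \<phi> = 1" using phi0 by (intro inverse_mult_eq_1') simp
  then show ?thesis by (simp add: LF_def mult.left_commute)
qed

lemma LF_1': "LF \<phi> $ Suc 0 = 1" using LF_1 by simp

lemma LV_0: "LV \<phi> $ 0 = 0"
  by (simp add: LV_def fps_inv_def)

lemma LV_1: "LV \<phi> $ 1 = 1"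
  by (simp add: LV_def fps_inv_def LF_1')

lemma LV_LF: "LV \<phi> oo LF \<phi> = fps_X"
  unfolding LV_def by (rule fps_inv) (simp_all add: LF_0 LF_1')

lemma LF_LV: "LF \<phi> oo LV \<phi> = fps_X"
  unfolding LV_def by (rule fps_inv_right) (simp_all add: LF_0 LF_1')

lemma LV_eq: "LV \<phi> = fps_X * (\<phi> oo LV \<phi>)"
proof -
  have "fps_X = LF \<phi> oo LV \<phi>" by (simp add: LF_LV)
  also have "\<dots> = (fps_X oo LV \<phi>) * (inverse \<phi> oo LV \<phi>)"
    unfolding LF_def by (rule fps_compose_mult_distrib) (simp add: LV_0)
  also have "\<dots> = LV \<phi> * inverse (\<phi> oo LV \<phi>)"
    using LV_0 phi0 by (simp add: fps_inverse_compose)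
  finally have e: "fps_X = LV \<phi> * inverse (\<phi> oo LV \<phi>)" .
  have "inverse (\<phi> oo LV \<phi>) * (\<phi> oo LV \<phi>) = 1"
    using phi0 by (intro inverse_mult_eq_1) simp
  then have "fps_X * (\<phi> oo LV \<phi>) = LV \<phi>"
    by (simp add: e mult.assoc)
  then show ?thesis by simp
qed

lemma res_G:
  fixes K :: "'a fps" and m :: nat
  assumes "m \<ge> 1"
  shows "fls_residue ((fls_shift 1 (fps_to_fls \<phi>))^m * fps_to_fls K) = (\<phi>^m * K) $ (m - 1)"
proof -
  have "(fls_shift 1 (fps_to_fls \<phi>))^m * fps_to_fls K = fls_shift (int m) (fps_to_fls (\<phi>^m * K))"
    by (simp add: fls_shifted_pow fps_to_fls_power fls_times_fps_to_fls fls_shifted_times_simps)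
  moreover have "nat (int m - 1) = m - 1" using assms by linarith
  ultimately show ?thesis using assms by simp
qed

lemma key_zero:
  assumes j: "j \<ge> 1"
  shows "(\<phi>^(j+1) * fps_deriv (LF \<phi>)) $ j = 0"
proof -
  define G where "G = fls_shift 1 (fps_to_fls \<phi>)"
  define fF where "fF = fps_to_fls (LF \<phi>)"
  have fFG: "fF * G = 1"
  proof -
    have "fF = fls_shift (-1) (fps_to_fls (inverse \<phi>))"
      by (simp add: fF_def LF_def fls_times_fps_to_fls fls_X_times_conv_shift)
    then have "fF * G = fps_to_fls (inverse \<phi> * \<phi>)"
      by (simp add: G_def fls_shifted_times_simps fls_times_fps_to_fls)
    also have "inverse \<phi> * \<phi> = 1" using phi0 by (intro inverse_mult_eq_1) simp
    finally show ?thesis by simp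
  qed
  have dG: "fls_deriv G = - G * fls_deriv fF * G"
  proof -
    have "fls_deriv (fF * G) = 0" using fFG by simp
    then have "fF * fls_deriv G + fls_deriv fF * G = 0" by simp
    then have "G * (fF * fls_deriv G + fls_deriv fF * G) = 0" by simp
    moreover have "G * (fF * fls_deriv G + fls_deriv fF * G) = (G * fF) * fls_deriv G + G * fls_deriv fF * G"
      by (simp add: distrib_left mult.assoc)
    moreover have "G * fF = 1" using fFG by (simp add: mult.commute)
    ultimately have "fls_deriv G + G * fls_deriv fF * G = 0" by simp
    then show ?thesis by (simp add: eq_neg_iff_add_eq_0)
  qed
  have "fls_deriv (G^j) = of_nat j * G^(j-1) * fls_deriv G" by (rule fls_deriv_power)
  also have "\<dots> = - of_nat j * (G^(j-1) * G * G) * fls_deriv fF"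
    by (simp add: dG algebra_simps)
  also have "G^(j-1) * G * G = G^(j+1)" using j
    by (metis Suc_eq_plus1 le_add_diff_inverse2 power_Suc2)
  finally have "fls_residue (- of_nat j * (G^(j+1) * fls_deriv fF)) = 0"
    using fls_residue_deriv[of "G^j"] by (simp add: mult.assoc)
  then have "of_nat j * fls_residue (G^(j+1) * fls_deriv fF) = 0"
    by (simp add: fls_of_nat)
  then have "fls_residue (G^(j+1) * fls_deriv fF) = 0" using j by simp
  moreover have "fls_deriv fF = fps_to_fls (fps_deriv (LF \<phi>))"
    by (simp add: fF_def fls_deriv_fps_to_fls)
  ultimately show ?thesis using res_G[of "j+1" "fps_deriv (LF \<phi>)"] by (simp add: G_def)
qed


lemma coeff_term:
  assumes n: "1 \<le> n" "n \<le> m"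
  shows "(\<phi>^m * (fps_deriv (LF \<phi>) * LF \<phi>^(n-1))) $ (m-1) = (\<phi>^(m-n+1) * fps_deriv (LF \<phi>)) $ (m-n)"
proof -
  have "m-n+1 + (n-1) = m" using n by simp
  then have pm: "\<phi>^m = \<phi>^(m-n+1) * \<phi>^(n-1)" by (metis power_add)
  have e1: "\<phi>^(n-1) * LF \<phi>^(n-1) = fps_X^(n-1)" by (simp add: phi_LF flip: power_mult_distrib)
  have e2: "\<phi>^m * (fps_deriv (LF \<phi>) * LF \<phi>^(n-1)) = (\<phi>^(m-n+1) * fps_deriv (LF \<phi>)) * (\<phi>^(n-1) * LF \<phi>^(n-1))"
    unfolding pm by (simp only: mult.assoc mult.commute mult.left_commute)
  have e3: "m - 1 - (n - 1) = m - n" using n by simp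
  show ?thesis
    unfolding e2 e1 fps_X_power_mult_right_nth using n e3 by simp
qed

lemma lagrange:
  assumes m: "m \<ge> 1"
  shows "of_nat m * (LV \<phi> ^ i) $ m = of_nat i * (if i \<le> m then (\<phi>^m) $ (m - i) else 0)"
proof -
  define V where "V = LV \<phi>"
  define F where "F = LF \<phi>"
  define a where "a = V ^ i"
  have F0: "F $ 0 = 0" by (simp add: F_def LF_0)
  have aF: "a oo F = fps_X ^ i"
    unfolding a_def using fps_compose_power[OF F0, of V i] LV_LF by (simp add: V_def F_def)
  define P where "P = (\<Sum>n=0..m. fps_const (a$n) * fps_X^n)"
  define R where "R = fps_shift (Suc m) a"
  have adec: "a = P + R * fps_X^(Suc m)"
  proof (rule fps_ext)
    fix k
    have "P $ k = (\<Sum>n=0..m. a$n * (if k = n then 1 else 0))"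
      by (simp add: P_def fps_sum_nth fps_X_power_nth)
    also have "\<dots> = (\<Sum>n=0..m. if k = n then a$k else 0)"
      by (intro sum.cong) auto
    also have "\<dots> = (if k \<le> m then a$k else 0)"
      by (simp add: sum.delta)
    finally show "a $ k = (P + R * fps_X^(Suc m)) $ k"
      by (simp add: R_def fps_X_power_mult_right_nth del: power_Suc)
  qed
  define S where "S = R oo F"
  have comp: "fps_X^i = (\<Sum>n=0..m. fps_const (a$n) * F^n) + S * F^(Suc m)"
  proof -
    have "fps_X^i = (P + R * fps_X^(Suc m)) oo F"
      using aF adec by simp
    also have "\<dots> = (P oo F) + ((R * fps_X^(Suc m)) oo F)"
      by (simp only: fps_compose_add_distrib)
    also have "P oo F = (\<Sum>n=0..m. fps_const (a$n) * F^n)"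
      unfolding P_def fps_compose_sum_distrib
      by (intro sum.cong refl) (simp add: fps_compose_mult_distrib[OF F0] fps_X_power_compose[OF F0])
    also have "(R * fps_X^(Suc m)) oo F = S * F^(Suc m)"
      unfolding S_def by (simp add: fps_compose_mult_distrib[OF F0] fps_X_power_compose[OF F0] del: power_Suc)
    finally show ?thesis .
  qed
  define T where "T = fps_deriv S * F + fps_const (of_nat (Suc m)) * S * fps_deriv F"
  have der: "fps_const (of_nat i) * fps_X^(i-1) =
      (\<Sum>n=0..m. fps_const (a$n * of_nat n) * (fps_deriv F * F^(n-1))) + F^m * T"
  proof -
    have "fps_deriv (fps_X^i :: 'a fps) = fps_const (of_nat i) * fps_X^(i-1)"
      by (simp add: fps_deriv_power)
    moreover have "fps_deriv (\<Sum>n=0..m. fps_const (a$n) * F^n) =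
        (\<Sum>n=0..m. fps_const (a$n * of_nat n) * (fps_deriv F * F^(n-1)))"
      by (simp add: fps_deriv_sum fps_deriv_power mult.assoc flip: fps_const_mult)
    moreover have "fps_deriv (S * F^(Suc m)) = F^m * T"
      by (simp add: T_def fps_deriv_power algebra_simps del: power_Suc)
         (simp add: algebra_simps)
    ultimately show ?thesis using comp by (metis fps_deriv_add)
  qed
  have "(\<phi>^m * (fps_const (of_nat i) * fps_X^(i-1))) $ (m-1) =
        of_nat i * (if i \<le> m then (\<phi>^m) $ (m - i) else 0)"
  proof (cases "i = 0")
    case True then show ?thesis by simp
  next
    case False
    then have "(\<phi>^m * fps_X^(i-1)) $ (m-1) = (if i \<le> m then (\<phi>^m) $ (m - i) else 0)"
      using m by (auto simp: fps_X_power_mult_right_nth)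
    then show ?thesis by (simp add: mult.left_commute[of "\<phi>^m"])
  qed
  also have "(\<phi>^m * (fps_const (of_nat i) * fps_X^(i-1))) $ (m-1) =
      (\<Sum>n=0..m. a$n * of_nat n * (\<phi>^m * (fps_deriv F * F^(n-1))) $ (m-1)) + (\<phi>^m * (F^m * T)) $ (m-1)"
    unfolding der by (simp add: distrib_left fps_sum_nth sum_distrib_left mult.left_commute[of "\<phi>^m"] mult.assoc)
  also have "(\<phi>^m * (F^m * T)) $ (m-1) = 0"
  proof -
    have e: "\<phi>^m * F^m = fps_X^m" using phi_LF by (simp add: F_def flip: power_mult_distrib)
    have e2: "\<phi>^m * (F^m * T) = T * fps_X^m"
      by (subst mult.assoc[symmetric], subst e, rule mult.commute)
    show ?thesis unfolding e2 fps_X_power_mult_right_nth using m by simp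
  qed
  also have "(\<Sum>n=0..m. a$n * of_nat n * (\<phi>^m * (fps_deriv F * F^(n-1))) $ (m-1)) =
             (\<Sum>n=0..m. if n = m then a$m * of_nat m else 0)"
  proof (rule sum.cong[OF refl])
    fix n assume n: "n \<in> {0..m}"
    show "a$n * of_nat n * (\<phi>^m * (fps_deriv F * F^(n-1))) $ (m-1) = (if n = m then a$m * of_nat m else 0)"
    proof (cases "n = 0")
      case True then show ?thesis using m by auto
    next
      case False
      then have c: "(\<phi>^m * (fps_deriv F * F^(n-1))) $ (m-1) = (\<phi>^(m-n+1) * fps_deriv F) $ (m-n)"
        using coeff_term[of n m] n by (simp add: F_def)
      show ?thesis
      proof (cases "n = m")
        case True
        then show ?thesis using c by (simp add: phi0 F_def LF_1')
      next
        case nm: False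
        have "(\<phi>^(m-n+1) * fps_deriv F) $ (m-n) = 0"
          using key_zero[of "m-n"] n nm by (simp add: F_def)
        then show ?thesis using c nm by simp
      qed
    qed
  qed
  also have "\<dots> = a$m * of_nat m" by (simp add: sum.delta')
  finally show ?thesis by (simp add: a_def V_def mult.commute)
qed

end

unbundle fps_syntax

definition gS :: "nat \<Rightarrow> 'a::comm_ring_1 fps" where "gS h = (\<Sum>j=1..<2*h+1. fps_X^j)"
definition phiC :: "nat \<Rightarrow> complex fps" where "phiC h = fps_binomial (1 / of_nat h) oo gS h"
definition Vh :: "nat \<Rightarrow> complex fps" where "Vh h = LV (phiC h)"

definition mapR :: "real fps \<Rightarrow> complex fps" where "mapR p = Abs_fps (\<lambda>n. of_real (p $ n))"

lemma mapR_nth [simp]: "mapR p $ n = of_real (p $ n)" by (simp add: mapR_def)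
lemma mapR_mult: "mapR (p * q) = mapR p * mapR q"
  by (rule fps_ext) (simp add: fps_mult_nth)
lemma mapR_one: "mapR 1 = 1" by (rule fps_ext) simp
lemma mapR_power: "mapR (p ^ i) = mapR p ^ i"
  by (induction i) (simp_all add: mapR_one mapR_mult)
lemma mapR_gS: "mapR (gS h) = gS h"
  by (rule fps_ext) (simp add: gS_def fps_sum_nth)

lemma gS_0 [simp]: "gS h $ 0 = 0" by (simp add: gS_def fps_sum_nth)

lemma of_real_gchoose: "of_real (a gchoose k) = (of_real a :: complex) gchoose k"
proof -
  have "(of_real a :: complex) gchoose k = (\<Prod>i=0..<k. of_real a - of_nat i) / fact k"
    by (simp add: gbinomial_prod_rev)
  also have "\<dots> = of_real ((\<Prod>i=0..<k. a - of_nat i) / fact k)"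
    by (simp add: of_real_prod)
  also have "\<dots> = of_real (a gchoose k)" by (simp add: gbinomial_prod_rev)
  finally show ?thesis by simp
qed

lemma compose_mapR: "(fps_binomial (of_real a :: complex) oo gS h) $ k = of_real ((fps_binomial a oo gS h) $ k)"
proof -
  have "(fps_binomial (of_real a :: complex) oo gS h) $ k = (\<Sum>i=0..k. (of_real a gchoose i) * (gS h ^ i) $ k)"
    by (simp add: fps_compose_nth)
  also have "\<dots> = (\<Sum>i=0..k. of_real (a gchoose i) * of_real ((gS h ^ i) $ k))"
  proof (intro sum.cong refl)
    fix i
    have "(gS h ^ i :: complex fps) = mapR (gS h ^ i)" by (simp add: mapR_power mapR_gS)
    then have "(gS h ^ i :: complex fps) $ k = of_real ((gS h ^ i) $ k)" by simp
    then show "(of_real a gchoose i) * (gS h ^ i :: complex fps) $ k = of_real (a gchoose i) * of_real ((gS h ^ i) $ k)"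
      by (simp add: of_real_gchoose)
  qed
  also have "\<dots> = of_real ((fps_binomial a oo gS h) $ k)"
    by (simp add: fps_compose_nth)
  finally show ?thesis .
qed

lemma phiC_0: "phiC h $ 0 = 1" by (simp add: phiC_def)

lemma phiC_pow: "phiC h ^ n = fps_binomial (of_nat n / of_nat h) oo gS h"
  unfolding phiC_def by (simp add: fps_compose_power fps_binomial_power)

lemma gbinom_m_eq:
  "complex_of_real (gbinom_m (real n / real h) (2*h+1) k) =
     (if k < 0 then 0 else (phiC h ^ n) $ nat k)"
proof -
  have "(fps_binomial (of_real (real n / real h)) oo gS h) $ nat k =
        complex_of_real ((fps_binomial (real n / real h) oo gS h) $ nat k)"
    by (rule compose_mapR)
  moreover have "(of_real (real n / real h) :: complex) = of_nat n / of_nat h" by simp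
  ultimately show ?thesis
    by (simp add: gbinom_m_def phiC_pow gS_def)
qed

lemma Vh_0: "Vh h $ 0 = 0" by (simp add: Vh_def LV_0[OF phiC_0])
lemma Vh_1: "Vh h $ 1 = 1" using LV_1[OF phiC_0] by (simp add: Vh_def)

lemma Vh_pow_nth: "(Vh h ^ i) $ n = Ufac h i n"
proof (cases "n = 0")
  case True
  then show ?thesis by (cases i) (simp_all add: Ufac_def fps_nth_power_0 Vh_0)
next
  case False
  then have n: "n \<ge> 1" by simp
  have L: "of_nat n * (Vh h ^ i) $ n = of_nat i * (if i \<le> n then (phiC h ^ n) $ (n - i) else 0)"
    unfolding Vh_def by (rule lagrange[OF phiC_0 n])
  have "Ufac h i n = of_nat i / of_nat n * (if int n - int i < 0 then 0 else (phiC h ^ n) $ nat (int n - int i))"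
    using False gbinom_m_eq[of n h "int n - int i"] by (simp add: Ufac_def)
  also have "\<dots> = of_nat i / of_nat n * (if i \<le> n then (phiC h ^ n) $ (n - i) else 0)"
    by (auto simp: nat_diff_distrib)
  also have "\<dots> = (Vh h ^ i) $ n" using L False
    by (simp add: field_simps)
  finally show ?thesis by simp
qed


unbundle fps_syntax

lemma omega_pow: "omega h ^ a = exp (of_nat a * (2 * pi * \<i> / of_nat h))"
  unfolding omega_def by (rule exp_of_nat_mult[symmetric])

lemma omega_pow_h: "h \<ge> 1 \<Longrightarrow> omega h ^ h = 1"
  by (simp add: omega_pow)

lemma omega_pow_mult_h: "h \<ge> 1 \<Longrightarrow> (omega h ^ a) ^ h = 1"
proof -
  assume h: "h \<ge> 1"
  have "(omega h ^ a) ^ h = (omega h ^ h) ^ a" by (simp flip: power_mult add: mult.commute)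
  then show ?thesis using omega_pow_h[OF h] by simp
qed

lemma omega_one_imp: assumes h: "h \<ge> 1" and d: "d < h" and e: "omega h ^ d = 1" shows "d = 0"
proof -
  have z: "of_nat d * (2 * pi * \<i> / of_nat h) = \<i> * complex_of_real (2 * pi * (real d / real h))"
    by (simp add: field_simps)
  have "exp (\<i> * complex_of_real (2 * pi * (real d / real h))) = 1"
    using e unfolding omega_pow z .
  then obtain n :: int where n: "2 * pi * (real d / real h) = of_int (2 * n) * pi"
    by (auto simp: exp_eq_1)
  then have "2 * pi * (real d / real h) = 2 * pi * of_int n" by (simp add: algebra_simps)
  then have "real d / real h = of_int n" using pi_gt_zero by (subst (asm) mult_cancel_left) auto
  then have "real d = of_int n * real h" using h by (simp add: field_simps)
  then have dn: "int d = n * int h" by (metis of_int_eq_iff of_int_mult of_int_of_nat_eq)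
  show ?thesis
  proof (cases "n = 0")
    case True then show ?thesis using dn by simp
  next
    case False
    show ?thesis
    proof (cases "n > 0")
      case True
      then have "n * int h = int h + (n - 1) * int h" by (simp add: algebra_simps)
      moreover have "(n - 1) * int h \<ge> 0" using True by simp
      ultimately show ?thesis using dn d by linarith
    next
      case nn: False
      then have "n * int h \<le> 0" using False by (simp add: mult_nonpos_nonneg)
      moreover have "n * int h \<noteq> 0" using False h by simp
      ultimately show ?thesis using dn by linarith
    qed
  qed
qed

lemma omega_inj:
  assumes h: "h \<ge> 1" and a: "a < h" and b: "b < h" and e: "omega h ^ a = omega h ^ b"
  shows "a = b"
proof -
  have nz: "omega h \<noteq> 0" by (simp add: omega_def)
  { fix a b :: nat assume ab: "a \<le> b" "b < h" "omega h ^ a = omega h ^ b"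
    have "omega h ^ a * omega h ^ (b - a) = omega h ^ b"
      using ab(1) by (simp flip: power_add)
    then have "omega h ^ a * omega h ^ (b - a) = omega h ^ a * 1"
      using ab(3) by simp
    then have "omega h ^ (b - a) = 1" using nz by simp
    moreover have "b - a < h" using ab by simp
    ultimately have "b - a = 0" using omega_one_imp[OF h] by blast
    then have "a = b" using ab by simp }
  then show ?thesis using a b e by (metis linorder_le_cases)
qed

definition om :: "nat \<Rightarrow> nat \<Rightarrow> complex" where "om h j = omega h ^ (j - 1)"
definition Vj :: "nat \<Rightarrow> nat \<Rightarrow> complex fps" where
  "Vj h j = Vh h oo (fps_const (om h j) * fps_X)"

lemma Vj_pow: "Vj h j ^ i = (Vh h ^ i) oo (fps_const (om h j) * fps_X)"
  unfolding Vj_def by (rule fps_compose_power) simp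

lemma Vj_pow_nth: "(Vj h j ^ i) $ n = om h j ^ n * Ufac h i n"
  by (simp add: Vj_pow fps_compose_linear Vh_pow_nth)

lemma Vj_0: "Vj h j $ 0 = 0" using Vj_pow_nth[of h j 1 0] by (simp add: Ufac_def)
lemma Vj_1: "Vj h j $ 1 = om h j"
  unfolding Vj_def using Vh_1[of h] by (simp add: fps_compose_linear)

lemma Vh_eq: assumes h: "h \<ge> 1" shows "Vh h ^ h = fps_X ^ h * (\<Sum>d=0..2*h. Vh h ^ d)"
proof -
  have V0: "Vh h $ 0 = 0" by (rule Vh_0)
  have "Vh h = fps_X * (phiC h oo Vh h)" unfolding Vh_def by (rule LV_eq[OF phiC_0])
  then have "Vh h ^ h = fps_X ^ h * (phiC h oo Vh h) ^ h" by (metis power_mult_distrib)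
  also have "(phiC h oo Vh h) ^ h = phiC h ^ h oo Vh h" by (rule fps_compose_power[OF V0])
  also have "phiC h ^ h = 1 + gS h"
    using h by (simp add: phiC_pow fps_binomial_1 fps_compose_add_distrib)
  also have "(1 + gS h) oo Vh h = (\<Sum>d=0..2*h. Vh h ^ d)"
  proof -
    have "(1 + gS h) oo Vh h = 1 + (\<Sum>j=1..<2*h+1. Vh h ^ j)"
      by (simp add: gS_def fps_compose_add_distrib fps_compose_sum_distrib fps_X_power_compose[OF V0])
    also have "\<dots> = (\<Sum>d=0..2*h. Vh h ^ d)"
      by (simp add: sum.atLeast_Suc_atMost atLeastLessThanSuc_atLeastAtMost)
    finally show ?thesis .
  qed
  finally show ?thesis .
qed

lemma Vj_eq: assumes h: "h \<ge> 1" shows "Vj h j ^ h = fps_X ^ h * (\<Sum>d=0..2*h. Vj h j ^ d)"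
proof -
  define c where "c = fps_const (om h j) * fps_X"
  have c0: "c $ 0 = 0" by (simp add: c_def)
  have "Vj h j ^ h = (fps_X ^ h * (\<Sum>d=0..2*h. Vh h ^ d)) oo c"
    using Vj_pow[of h j h] Vh_eq[OF h] by (simp add: c_def)
  also have "\<dots> = c ^ h * (\<Sum>d=0..2*h. Vj h j ^ d)"
    by (simp add: fps_compose_mult_distrib[OF c0] fps_X_power_compose[OF c0]
                  fps_compose_sum_distrib) (simp add: Vj_pow c_def)
  also have "c ^ h = fps_X ^ h"
    using omega_pow_mult_h[OF h, of "j - 1"]
    by (simp add: c_def power_mult_distrib om_def fps_const_power)
  finally show ?thesis .
qed

lemma Vj_inj: assumes h: "h \<ge> 1" "i \<in> {1..h}" "j \<in> {1..h}" "Vj h i = Vj h j" shows "i = j"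
proof -
  have "om h i = om h j" using Vj_1[of h i] Vj_1[of h j] h(4) by simp
  then have "i - 1 = j - 1" using omega_inj[OF h(1), of "i-1" "j-1"] h by (auto simp: om_def)
  then show ?thesis using h by auto
qed


unbundle fps_syntax
unbundle Formal_Laurent_Series.fps_syntax

lemma fps_to_fls_sum: "fps_to_fls (\<Sum>x\<in>A. f x) = (\<Sum>x\<in>A. fps_to_fls (f x))"
  by (induction A rule: infinite_finite_induct) auto

lemma fps_to_fls_prod: "fps_to_fls (\<Prod>x\<in>A. f x) = (\<Prod>x\<in>A. fps_to_fls (f x))"
  by (induction A rule: infinite_finite_induct) (auto simp: fls_times_fps_to_fls)

lemma geom_inverse:
  fixes v :: "'a::field"
  shows "inverse (fps_of_poly [:1, - v:]) = Abs_fps (\<lambda>n. v ^ n)"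
proof (rule fps_inverse_unique)
  show "fps_of_poly [:1, - v:] * Abs_fps (\<lambda>n. v ^ n) = 1"
  proof (rule fps_ext)
    fix n
    have e: "fps_of_poly [:1, - v:] = 1 - fps_const v * fps_X"
      by (simp add: fps_of_poly_pCons fps_of_poly_const algebra_simps fps_const_neg)
    show "(fps_of_poly [:1, - v:] * Abs_fps (\<lambda>n. v ^ n)) $ n = 1 $ n"
      unfolding e by (cases n) (simp_all add: algebra_simps fps_X_mult_nth mult.assoc)
  qed
qed

lemma prod_linear_dvd:
  fixes s :: "'b \<Rightarrow> 'a::field" and p :: "'a poly"
  assumes "finite A" "inj_on s A" "\<forall>a\<in>A. s a \<noteq> 0" "\<forall>a\<in>A. poly p (inverse (s a)) = 0"
  shows "(\<Prod>a\<in>A. [:1, - s a:]) dvd p"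
  using assms
proof (induction A rule: finite_induct)
  case empty then show ?case by simp
next
  case (insert a A)
  have "(\<Prod>a\<in>A. [:1, - s a:]) dvd p"
    using insert by (intro insert.IH) (auto simp: inj_on_insert)
  then obtain q where q: "p = (\<Prod>a\<in>A. [:1, - s a:]) * q" by (elim dvdE)
  define x where "x = inverse (s a)"
  have sa: "s a \<noteq> 0" using insert by auto
  have "poly (\<Prod>a\<in>A. [:1, - s a:]) x \<noteq> 0"
  proof -
    have "\<forall>b\<in>A. 1 - x * s b \<noteq> 0"
    proof
      fix b assume b: "b \<in> A"
      show "1 - x * s b \<noteq> 0"
      proof
        assume "1 - x * s b = 0"
        then have "s b = s a" using sa by (simp add: x_def field_simps)
        then have "b = a" using insert.prems(1) b by (auto simp: inj_on_def)
        then show False using b insert.hyps by simp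
      qed
    qed
    then show ?thesis using insert.hyps by (simp add: poly_prod prod_zero_iff algebra_simps)
  qed
  moreover have "poly p x = 0" using insert.prems by (simp add: x_def)
  ultimately have "poly q x = 0" using q by (simp add: poly_prod)
  then have dv: "[:- x, 1:] dvd q" by (simp add: poly_eq_0_iff_dvd)
  have eq: "[:1, - s a:] = smult (- s a) [:- x, 1:]" using sa by (simp add: x_def)
  have "smult (- s a) [:- x, 1:] dvd q"
    by (rule iffD2[OF smult_dvd_iff]) (use sa dv in simp)
  then have "[:1, - s a:] dvd q" by (subst eq)
  then have d2: "[:1, - s a:] * (\<Prod>a\<in>A. [:1, - s a:]) dvd q * (\<Prod>a\<in>A. [:1, - s a:])"
    by (rule mult_dvd_mono[OF _ dvd_refl])
  have "(\<Prod>a\<in>insert a A. [:1, - s a:]) = [:1, - s a:] * (\<Prod>a\<in>A. [:1, - s a:])"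
    by (rule prod.insert[OF insert.hyps])
  moreover have "q * (\<Prod>a\<in>A. [:1, - s a:]) = p" using q by (metis mult.commute)
  ultimately show ?case using d2 by (simp only:)
qed

definition vv :: "nat \<Rightarrow> nat \<Rightarrow> complex fls" where "vv h j = fps_to_fls (Vj h j)"
definition hk :: "nat \<Rightarrow> nat \<Rightarrow> complex fps" where
  "hk h k = (\<Sum>is\<in>TS {1..h} k. \<Prod>j\<in>{1..h}. Vj h j ^ is j)"
definition pp :: "nat \<Rightarrow> complex fls poly" where
  "pp h = monom 1 h - smult (fls_X ^ h) (\<Sum>d=0..2*h. monom 1 d)"

lemma Vj_nz: "h \<ge> 1 \<Longrightarrow> Vj h j \<noteq> 0"
proof
  assume "Vj h j = 0"
  then have "Vj h j $ 1 = 0" by simp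
  then show False using Vj_1[of h j] by (simp add: om_def omega_def)
qed

lemma vv_nz: "h \<ge> 1 \<Longrightarrow> vv h j \<noteq> 0" by (simp add: vv_def Vj_nz)

lemma vv_eq: "h \<ge> 1 \<Longrightarrow> vv h j ^ h = fls_X ^ h * (\<Sum>d=0..2*h. vv h j ^ d)"
  using arg_cong[OF Vj_eq, of h fps_to_fls j]
  by (simp add: vv_def fps_to_fls_power fls_times_fps_to_fls fps_to_fls_sum)

lemma poly_pp: "poly (pp h) x = x ^ h - fls_X ^ h * (\<Sum>d=0..2*h. x ^ d)"
  by (simp add: pp_def poly_monom poly_sum)

lemma pp_root:
  assumes h: "h \<ge> 1"
  shows "poly (pp h) (inverse (vv h j)) = 0"
proof -
  define v where "v = vv h j"
  define x where "x = inverse v"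
  have v0: "v \<noteq> 0" using vv_nz[OF h] by (simp add: v_def)
  have vx: "v * x = 1" using v0 by (simp add: x_def)
  have e1: "v ^ (2*h) * x ^ h = v ^ h"
  proof -
    have "v ^ (2*h) * x ^ h = v ^ h * (v * x) ^ h" by (simp only: mult_2 power_add power_mult_distrib mult.assoc)
    also have "\<dots> = v ^ h" by (simp only: vx power_one mult_1_right)
    finally show ?thesis .
  qed
  have e2: "v ^ (2*h) * x ^ d = v ^ (2*h - d)" if "d \<le> 2*h" for d
  proof -
    have "v ^ (2*h) = v ^ (2*h - d) * v ^ d" using that by (simp flip: power_add)
    then have "v ^ (2*h) * x ^ d = v ^ (2*h - d) * (v * x) ^ d" by (simp add: power_mult_distrib)
    also have "\<dots> = v ^ (2*h - d)" by (simp only: vx power_one mult_1_right)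
    finally show ?thesis .
  qed
  have e1': "x ^ h * v ^ (h * 2) = v ^ h" using e1 by (simp add: mult.commute)
  have "v ^ (2*h) * poly (pp h) x = v ^ h - fls_X ^ h * (\<Sum>d=0..2*h. v ^ (2*h) * x ^ d)"
    by (simp add: poly_pp algebra_simps e1 e1' sum_distrib_left)
  also have "(\<Sum>d=0..2*h. v ^ (2*h) * x ^ d) = (\<Sum>d=0..2*h. v ^ (2*h - d))"
    by (intro sum.cong refl) (simp add: e2)
  also have "\<dots> = (\<Sum>d=0..2*h. v ^ d)"
    using sum.atLeastAtMost_rev[of "\<lambda>d. v ^ (2*h - d)" 0 "2*h"] by simp
  also have "v ^ h - fls_X ^ h * (\<Sum>d=0..2*h. v ^ d) = 0"
    using vv_eq[OF h, of j] by (simp add: v_def)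
  finally have "v ^ (2*h) * poly (pp h) x = 0" .
  then show ?thesis using v0 by (simp add: x_def v_def)
qed


unbundle fps_syntax
unbundle Formal_Laurent_Series.fps_syntax

definition DD :: "nat \<Rightarrow> complex fls poly" where "DD h = (\<Prod>j\<in>{1..h}. [:1, - vv h j:])"
definition HH :: "nat \<Rightarrow> complex fls fps" where
  "HH h = (\<Prod>j\<in>{1..h}. inverse (fps_of_poly [:1, - vv h j:]))"

context
  fixes h :: nat
  assumes h: "h \<ge> 1"
begin

lemma vv_inj: "inj_on (vv h) {1..h}"
proof (rule inj_onI)
  fix i j assume ij: "i \<in> {1..h}" "j \<in> {1..h}" "vv h i = vv h j"
  then have "Vj h i = Vj h j" by (simp add: vv_def)
  then show "i = j" using Vj_inj[OF h] ij(1,2) by blast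
qed

lemma DD_dvd: "DD h dvd pp h"
  unfolding DD_def
  by (rule prod_linear_dvd[OF _ vv_inj]) (auto simp: vv_nz[OF h] pp_root[OF h])

lemma DD_nz: "DD h \<noteq> 0"
  unfolding DD_def by (auto simp: vv_nz[OF h])

lemma deg_DD: "degree (DD h) = h"
proof -
  have "degree (DD h) = (\<Sum>j\<in>{1..h}. degree [:1, - vv h j:])"
    unfolding DD_def by (rule degree_prod_eq_sum_degree) (auto simp: vv_nz[OF h])
  also have "\<dots> = (\<Sum>j\<in>{1..h}. 1)" by (intro sum.cong refl) (simp add: vv_nz[OF h])
  finally show ?thesis by simp
qed

lemma coeff_pp: "coeff (pp h) i = (if i = h then 1 else 0) - (if i \<le> 2*h then fls_X ^ h else 0)"
  by (simp add: pp_def coeff_sum coeff_monom)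

lemma deg_pp: "degree (pp h) \<le> 2*h"
  by (rule degree_le) (auto simp: coeff_pp)

lemma quotient_coeff:
  obtains q where "pp h = DD h * q" "\<And>n. n > h \<Longrightarrow> coeff q n = 0"
proof -
  obtain q where q: "pp h = DD h * q" using DD_dvd by (elim dvdE)
  have "coeff q n = 0" if n: "n > h" for n
  proof (cases "q = 0")
    case True then show ?thesis by simp
  next
    case False
    then have "degree (pp h) = h + degree q" using q DD_nz deg_DD by (simp add: degree_mult_eq)
    then have "degree q \<le> h" using deg_pp by simp
    then show ?thesis using n by (intro coeff_eq_0) simp
  qed
  then show ?thesis using q that by blast
qed

lemma DD_HH: "fps_of_poly (DD h) * HH h = 1"
proof -
  have "fps_of_poly (DD h) * HH h =
        (\<Prod>j\<in>{1..h}. fps_of_poly [:1, - vv h j:] * inverse (fps_of_poly [:1, - vv h j:]))"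
    by (simp add: DD_def HH_def fps_of_poly_prod prod.distrib)
  also have "\<dots> = 1"
    by (intro prod.neutral ballI inverse_mult_eq_1') simp
  finally show ?thesis .
qed

lemma HH_nth: "HH h $ k = fps_to_fls (hk h k)"
proof -
  have "HH h $ k = (\<Sum>is\<in>TS {1..h} k. \<Prod>j\<in>{1..h}. inverse (fps_of_poly [:1, - vv h j:]) $ is j)"
    unfolding HH_def by (rule fps_prod_nth_TS) simp
  also have "\<dots> = (\<Sum>is\<in>TS {1..h} k. \<Prod>j\<in>{1..h}. vv h j ^ is j)"
    by (simp add: geom_inverse)
  also have "\<dots> = fps_to_fls (hk h k)"
    by (simp add: hk_def fps_to_fls_sum fps_to_fls_prod fps_to_fls_power vv_def)
  finally show ?thesis .
qed

lemma fps_pp: "fps_of_poly (pp h) = fps_X ^ h - fps_const (fls_X ^ h) * (\<Sum>d=0..2*h. fps_X ^ d)"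
  by (simp add: pp_def fps_of_poly_diff fps_of_poly_monom' fps_of_poly_smult fps_of_poly_sum)

lemma HH_rec:
  assumes k: "k \<ge> 1"
  shows "HH h $ k = fls_X ^ h * (\<Sum>d=0..2*h. if k + h < d then 0 else HH h $ (k + h - d))"
proof -
  obtain q where q: "pp h = DD h * q" "\<And>n. n > h \<Longrightarrow> coeff q n = 0" using quotient_coeff by blast
  have "fps_of_poly (pp h) * HH h = fps_of_poly q"
    using DD_HH by (simp add: q(1) fps_of_poly_mult mult.commute mult.left_commute)
  then have "(fps_of_poly (pp h) * HH h) $ (k + h) = 0" using q(2) k by simp
  moreover have "(fps_of_poly (pp h) * HH h) $ (k + h) =
      HH h $ k - fls_X ^ h * (\<Sum>d=0..2*h. if k + h < d then 0 else HH h $ (k + h - d))"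
  proof -
    have E: "fps_of_poly (pp h) * HH h = fps_X^h * HH h - fps_const (fls_X^h) * (\<Sum>d=0..2*h. fps_X^d * HH h)"
      by (simp only: fps_pp left_diff_distrib mult.assoc sum_distrib_right)
    show ?thesis
      unfolding E fps_sub_nth fps_mult_left_const_nth fps_sum_nth fps_X_power_mult_nth by simp
  qed
  ultimately show ?thesis by simp
qed

lemma hk_rec:
  assumes k: "k \<ge> 1"
  shows "hk h k = fps_X ^ h * (\<Sum>d=0..2*h. if k + h < d then 0 else hk h (k + h - d))"
proof -
  have e: "\<And>m. HH h $ m = fps_to_fls (hk h m)" by (rule HH_nth)
  have "fps_to_fls (hk h k) = fls_X ^ h * (\<Sum>d=0..2*h. if k + h < d then 0 else fps_to_fls (hk h (k + h - d)))"
    using HH_rec[OF k] unfolding e .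
  also have "(\<Sum>d=0..2*h. if k + h < d then 0 else fps_to_fls (hk h (k + h - d))) =
      fps_to_fls (\<Sum>d=0..2*h. if k + h < d then 0 else hk h (k + h - d))"
    unfolding fps_to_fls_sum by (intro sum.cong refl) auto
  also have "fls_X ^ h * fps_to_fls (\<Sum>d=0..2*h. if k + h < d then 0 else hk h (k + h - d)) =
      fps_to_fls (fps_X ^ h * (\<Sum>d=0..2*h. if k + h < d then 0 else hk h (k + h - d)))"
    by (simp add: fls_times_fps_to_fls fps_to_fls_power)
  finally show ?thesis by simp
qed

lemma hk_coeff_rec:
  assumes k: "k \<ge> 1"
  shows "hk h k $ (Suc n * h) = (\<Sum>d=0..2*h. if k + h < d then 0 else hk h (k + h - d) $ (n * h))"
proof -
  have "hk h k $ (Suc n * h) = (\<Sum>d=0..2*h. if k + h < d then 0 else hk h (k + h - d)) $ (n * h)"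
    by (subst hk_rec[OF k]) (simp add: fps_X_power_mult_nth)
  also have "\<dots> = (\<Sum>d=0..2*h. (if k + h < d then 0 else hk h (k + h - d)) $ (n * h))"
    by (rule fps_sum_nth)
  also have "\<dots> = (\<Sum>d=0..2*h. if k + h < d then 0 else hk h (k + h - d) $ (n * h))"
    by (intro sum.cong refl) simp
  finally show ?thesis .
qed

end


lemma sum_list_bound: "set s \<subseteq> {- int h..int h} \<Longrightarrow> sum_list s \<le> int (length s * h)"
  by (induction s) auto

lemma finite_pos_walks: "finite (pos_walks h n k)"
proof -
  have "pos_walks h n k \<subseteq> {s. set s \<subseteq> {- int h..int h} \<and> length s = n}"
    by (auto simp: pos_walks_def)
  then show ?thesis by (rule finite_subset) (rule finite_lists_length_eq, simp)
qed

lemma pos_walks_0: "pos_walks h 0 k = (if k = 0 then {[]} else {})"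
  by (auto simp: pos_walks_def)

lemma pos_walks_nonpos: "k \<le> 0 \<Longrightarrow> pos_walks h (Suc n) k = {}"
proof (rule ccontr)
  assume k: "k \<le> 0" and "pos_walks h (Suc n) k \<noteq> {}"
  then obtain s where s: "s \<in> pos_walks h (Suc n) k" by auto
  then have a: "\<forall>i\<in>{1..Suc n}. sum_list (take i s) \<ge> 1" "length s = Suc n" "sum_list s = k"
    by (auto simp: pos_walks_def)
  have "Suc n \<in> {1..Suc n}" by simp
  with a(1) have "sum_list (take (Suc n) s) \<ge> 1" by blast
  then show False using k a by simp
qed

lemma pos_walks_Suc_eq:
  assumes k: "k \<ge> 1"
  shows "pos_walks h (Suc n) k =
    (\<lambda>(d,s). s @ [d]) ` (SIGMA d:{- int h..int h}. pos_walks h n (k - d))"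
proof
  show "pos_walks h (Suc n) k \<subseteq> (\<lambda>(d,s). s @ [d]) ` (SIGMA d:{- int h..int h}. pos_walks h n (k - d))"
  proof
    fix s assume s: "s \<in> pos_walks h (Suc n) k"
    then have len: "length s = Suc n" by (simp add: pos_walks_def)
    then have "s \<noteq> []" by auto
    then have se: "s = butlast s @ [last s]" by simp
    have "last s \<in> set s" using \<open>s \<noteq> []\<close> by simp
    then have ld: "last s \<in> {- int h..int h}" using s by (auto simp: pos_walks_def)
    have "butlast s \<in> pos_walks h n (k - last s)"
    proof -
      have "set (butlast s) \<subseteq> set s" by (rule in_set_butlastD[THEN subsetI])
      moreover have "\<forall>i\<in>{1..n}. sum_list (take i (butlast s)) \<ge> 1"
      proof
        fix i assume i: "i \<in> {1..n}"
        have "take i (butlast s) = take i s" using i len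
          by (simp add: take_butlast)
        then show "sum_list (take i (butlast s)) \<ge> 1" using s i by (auto simp: pos_walks_def)
      qed
      moreover have "sum_list s = sum_list (butlast s) + last s" by (subst se) simp
      then have "sum_list (butlast s) = k - last s" using s by (simp add: pos_walks_def)
      ultimately show ?thesis using s len by (auto simp: pos_walks_def)
    qed
    then show "s \<in> (\<lambda>(d,s). s @ [d]) ` (SIGMA d:{- int h..int h}. pos_walks h n (k - d))"
      using ld se by (intro image_eqI[where x="(last s, butlast s)"]) auto
  qed
next
  show "(\<lambda>(d,s). s @ [d]) ` (SIGMA d:{- int h..int h}. pos_walks h n (k - d)) \<subseteq> pos_walks h (Suc n) k"
  proof clarify
    fix d s assume d: "d \<in> {- int h..int h}" and s: "s \<in> pos_walks h n (k - d)"
    have len: "length s = n" using s by (simp add: pos_walks_def)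
    have "\<forall>i\<in>{1..Suc n}. sum_list (take i (s @ [d])) \<ge> 1"
    proof
      fix i assume i: "i \<in> {1..Suc n}"
      show "sum_list (take i (s @ [d])) \<ge> 1"
      proof (cases "i = Suc n")
        case True
        then show ?thesis using len s k by (simp add: pos_walks_def)
      next
        case False
        then have "take i (s @ [d]) = take i s" using i len by simp
        then show ?thesis using s i False by (auto simp: pos_walks_def)
      qed
    qed
    then show "s @ [d] \<in> pos_walks h (Suc n) k"
      using s d len by (auto simp: pos_walks_def)
  qed
qed

lemma card_pos_walks_Suc:
  assumes k: "k \<ge> 1"
  shows "card (pos_walks h (Suc n) k) = (\<Sum>d\<in>{- int h..int h}. card (pos_walks h n (k - d)))"
proof -
  have inj: "inj_on (\<lambda>(d,s). s @ [d]) (SIGMA d:{- int h..int h}. pos_walks h n (k - d))"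
    by (auto simp: inj_on_def)
  show ?thesis
    unfolding pos_walks_Suc_eq[OF k] card_image[OF inj]
    by (subst card_SigmaI) (auto simp: finite_pos_walks)
qed

lemma pos_meanders_eq:
  "pos_meanders h n = (\<Union>k\<in>{0..n*h}. pos_walks h n (int k))"
proof
  show "pos_meanders h n \<subseteq> (\<Union>k\<in>{0..n*h}. pos_walks h n (int k))"
  proof
    fix s assume s: "s \<in> pos_meanders h n"
    have "sum_list s \<le> int (n*h)" using s sum_list_bound[of s h] by (auto simp: pos_meanders_def)
    moreover have "sum_list s \<ge> 0"
    proof (cases n)
      case 0 then show ?thesis using s by (auto simp: pos_meanders_def)
    next
      case (Suc m)
      have a: "\<forall>i\<in>{1..n}. sum_list (take i s) \<ge> 1" "length s = n" using s by (auto simp: pos_meanders_def)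
      have "n \<in> {1..n}" using Suc by simp
      with a(1) have "sum_list (take n s) \<ge> 1" by blast
      then show ?thesis using a by simp
    qed
    ultimately show "s \<in> (\<Union>k\<in>{0..n*h}. pos_walks h n (int k))"
      using s by (auto simp: pos_meanders_def pos_walks_def nat_le_iff intro!: bexI[where x="nat (sum_list s)"])
  qed
qed (auto simp: pos_meanders_def pos_walks_def)

lemma card_pos_meanders:
  "card (pos_meanders h n) = (\<Sum>k\<in>{0..n*h}. card (pos_walks h n (int k)))"
  unfolding pos_meanders_eq
  by (rule card_UN_disjoint) (auto simp: finite_pos_walks, auto simp: pos_walks_def)


unbundle fps_syntax

lemma fps_prod_nth_0: "(\<Prod>j\<in>A. f j) $ 0 = (\<Prod>j\<in>A. (f j :: 'a::comm_ring_1 fps) $ 0)"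
  by (induction A rule: infinite_finite_induct) auto

lemma TS_0: "TS A 0 = (if finite A then {restrict (\<lambda>_. 0) A} else {x \<in> A \<rightarrow>\<^sub>E UNIV. sum x A = 0})"
  by (auto simp: TS_def PiE_def extensional_def fun_eq_iff)

lemma hk_0: "h \<ge> 1 \<Longrightarrow> hk h 0 = 1"
  by (simp add: hk_def TS_0)

lemma Ufac_0_right: "Ufac h i 0 = (if i = 0 then 1 else 0)"
  by (simp add: Ufac_def)

lemma Ufac_gt: "i > n \<Longrightarrow> Ufac h i n = 0"
  by (simp add: Ufac_def gbinom_m_def)

lemma hk_nth_0:
  assumes "k \<ge> 1" shows "hk h k $ 0 = 0"
proof -
  have "(\<Prod>j\<in>{1..h}. Vj h j ^ is j) $ 0 = 0" if "is \<in> TS {1..h} k" for "is"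
  proof -
    from that assms have s: "sum is {1..h} = k" by (simp add: TS_def)
    have "\<exists>j\<in>{1..h}. is j \<noteq> 0"
    proof (rule ccontr)
      assume "\<not> (\<exists>j\<in>{1..h}. is j \<noteq> 0)"
      then have "sum is {1..h} = 0" by (intro sum.neutral) auto
      with s assms show False by simp
    qed
    then obtain j where j: "j \<in> {1..h}" "is j \<noteq> 0" by blast
    have "(\<Prod>j\<in>{1..h}. Vj h j ^ is j) $ 0 = (\<Prod>j\<in>{1..h}. (Vj h j ^ is j) $ 0)"
      by (rule fps_prod_nth_0)
    also have "\<dots> = 0"
      using j by (intro prod_zero) (auto simp: Vj_pow_nth Ufac_0_right intro!: bexI[of _ j])
    finally show ?thesis .
  qed
  then show ?thesis by (simp add: hk_def fps_sum_nth)
qed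

definition AA :: "nat \<Rightarrow> nat \<Rightarrow> nat \<Rightarrow> complex" where "AA h n k = hk h k $ (n * h)"

lemma pos_walks_neg: "k < 0 \<Longrightarrow> pos_walks h n k = {}"
  by (cases n) (auto simp: pos_walks_0 pos_walks_nonpos)

lemma card_AA:
  assumes h: "h \<ge> 1"
  shows "of_nat (card (pos_walks h n (int k))) = AA h n k"
proof (induction n arbitrary: k)
  case 0
  show ?case
  proof (cases "k = 0")
    case True then show ?thesis by (simp add: pos_walks_0 AA_def hk_0[OF h])
  next
    case False then show ?thesis by (simp add: pos_walks_0 AA_def hk_nth_0)
  qed
next
  case (Suc n)
  show ?case
  proof (cases "k = 0")
    case True
    then have "pos_walks h (Suc n) (int k) = {}" by (simp add: pos_walks_nonpos)
    moreover have "AA h (Suc n) 0 = 0" using h by (simp add: AA_def hk_0)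
    ultimately show ?thesis using True by simp
  next
    case False
    then have k: "k \<ge> 1" by simp
    have "card (pos_walks h (Suc n) (int k)) = (\<Sum>d\<in>{- int h..int h}. card (pos_walks h n (int k - d)))"
      using k by (intro card_pos_walks_Suc) simp
    also have "\<dots> = (\<Sum>e\<in>{0..2*h}. card (pos_walks h n (int k - (int e - int h))))"
    proof -
      have bij: "bij_betw (\<lambda>e. int e - int h) {0..2*h} {- int h..int h}"
        by (rule bij_betw_byWitness[where f'="\<lambda>d. nat (d + int h)"]) auto
      show ?thesis by (rule sum.reindex_bij_betw[OF bij, symmetric])
    qed
    finally have c: "of_nat (card (pos_walks h (Suc n) (int k))) =
        (\<Sum>e\<in>{0..2*h}. of_nat (card (pos_walks h n (int k - (int e - int h)))) :: complex)"
      by simp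
    also have "\<dots> = (\<Sum>e=0..2*h. if k + h < e then 0 else AA h n (k + h - e))"
    proof (intro sum.cong refl)
      fix e assume e: "e \<in> {0..2*h}"
      show "of_nat (card (pos_walks h n (int k - (int e - int h)))) =
            (if k + h < e then 0 else AA h n (k + h - e))"
      proof (cases "k + h < e")
        case True
        then have "int k - (int e - int h) < 0" by simp
        then show ?thesis using True by (simp add: pos_walks_neg)
      next
        case False
        have eq: "int k - (int e - int h) = int (k + h - e)" using False by simp
        have eq': "int (k + h - e) = int k + int h - int e" using False by simp
        have eq2: "int k - (int e - int h) = int k + int h - int e" by simp
        show ?thesis using False unfolding eq2 by (simp only: Suc.IH[of "k + h - e", unfolded eq'] if_False not_less[symmetric])
      qed
    qed
    also have "\<dots> = AA h (Suc n) k"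
      unfolding AA_def by (rule hk_coeff_rec[OF h k, symmetric])
    finally show ?thesis .
  qed
qed

lemma tuples_sum_TS: "tuples_sum h N = TS {1..h} N"
  by (simp add: tuples_sum_def TS_def)

lemma AA_formula:
  assumes h: "h \<ge> 1"
  shows "AA h n k = (\<Sum>ns\<in>tuples_sum h (n*h). \<Sum>is\<in>tuples_sum h k. term46 h ns is)"
proof -
  have "AA h n k = (\<Sum>is\<in>TS {1..h} k. (\<Prod>j\<in>{1..h}. Vj h j ^ is j) $ (n * h))"
    by (simp add: AA_def hk_def fps_sum_nth)
  also have "\<dots> = (\<Sum>is\<in>TS {1..h} k. \<Sum>ns\<in>TS {1..h} (n*h). \<Prod>j\<in>{1..h}. (Vj h j ^ is j) $ ns j)"
    by (intro sum.cong refl fps_prod_nth_TS) simp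
  also have "\<dots> = (\<Sum>is\<in>TS {1..h} k. \<Sum>ns\<in>TS {1..h} (n*h). term46 h ns is)"
  proof (intro sum.cong refl)
    fix "is" ns
    have "(\<Prod>j\<in>{1..h}. (Vj h j ^ is j) $ ns j) = (\<Prod>j\<in>{1..h}. Ufac h (is j) (ns j) * (omega h ^ (j - 1)) ^ ns j)"
      by (intro prod.cong refl) (simp add: Vj_pow_nth om_def mult.commute)
    also have "\<dots> = term46 h ns is"
      by (simp add: term46_def prod.distrib power_sum power_mult)
    finally show "(\<Prod>j\<in>{1..h}. (Vj h j ^ is j) $ ns j) = term46 h ns is" .
  qed
  also have "\<dots> = (\<Sum>ns\<in>TS {1..h} (n*h). \<Sum>is\<in>TS {1..h} k. term46 h ns is)"
    by (rule sum.swap)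
  finally show ?thesis by (simp add: tuples_sum_TS)
qed

lemma term46_zero:
  assumes "j \<in> {1..h}" "is j > ns j"
  shows "term46 h ns is = 0"
  using assms by (auto simp: term46_def Ufac_gt intro!: prod_zero bexI[of _ j])

lemma infsum_term46:
  assumes h: "h \<ge> 1" and ns: "ns \<in> tuples_sum h N"
  shows "infsum (term46 h ns) ({1..h} \<rightarrow>\<^sub>E (UNIV :: nat set)) =
         (\<Sum>k=0..N. \<Sum>is\<in>tuples_sum h k. term46 h ns is)"
proof -
  define C where "C = (\<Union>k\<in>{0..N}. TS {1..h} k)"
  have finC: "finite C" by (auto simp: C_def intro: finite_TS)
  have "(\<Sum>k=0..N. \<Sum>is\<in>tuples_sum h k. term46 h ns is) = sum (term46 h ns) C"
    unfolding C_def tuples_sum_TS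
    by (rule sum.UNION_disjoint[symmetric]) (simp, simp add: finite_TS, auto simp: TS_def)
  moreover have "infsum (term46 h ns) ({1..h} \<rightarrow>\<^sub>E (UNIV :: nat set)) = infsum (term46 h ns) C"
  proof (rule infsum_cong_neutral)
    fix x assume "x \<in> C - ({1..h} \<rightarrow>\<^sub>E UNIV)"
    then show "term46 h ns x = 0" by (auto simp: C_def TS_def)
  next
    fix x assume x: "x \<in> ({1..h} \<rightarrow>\<^sub>E UNIV) - C"
    have "sum x {1..h} > N"
    proof (rule ccontr)
      assume "\<not> sum x {1..h} > N"
      then have "x \<in> TS {1..h} (sum x {1..h})" "sum x {1..h} \<in> {0..N}" using x by (auto simp: TS_def)
      then show False using x by (auto simp: C_def)
    qed
    moreover have "sum ns {1..h} = N" using ns by (simp add: tuples_sum_def)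
    ultimately have "\<exists>j\<in>{1..h}. x j > ns j"
      by (metis not_less sum_mono leD)
    then show "term46 h ns x = 0" using term46_zero by blast
  qed simp
  ultimately show ?thesis using finC by simp
qed


theorem theorem4p6:
  fixes h n k :: nat
  assumes "h \<ge> 1" and "k \<ge> 1"
  shows "of_nat (card (pos_walks h n (int k))) =
           (\<Sum>ns\<in>tuples_sum h (n*h). \<Sum>is\<in>tuples_sum h k. term46 h ns is)
       \<and> of_nat (card (pos_meanders h n)) =
           (\<Sum>ns\<in>tuples_sum h (n*h). infsum (term46 h ns) ({1..h} \<rightarrow>\<^sub>E (UNIV :: nat set)))"
proof
  show "of_nat (card (pos_walks h n (int k))) =
           (\<Sum>ns\<in>tuples_sum h (n*h). \<Sum>is\<in>tuples_sum h k. term46 h ns is)"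
    using card_AA[OF assms(1)] AA_formula[OF assms(1)] by simp
next
  have "(of_nat (card (pos_meanders h n)) :: complex) = (\<Sum>k=0..n*h. of_nat (card (pos_walks h n (int k))))"
    by (simp add: card_pos_meanders)
  also have "\<dots> = (\<Sum>k=0..n*h. \<Sum>ns\<in>tuples_sum h (n*h). \<Sum>is\<in>tuples_sum h k. term46 h ns is)"
    using card_AA[OF assms(1)] AA_formula[OF assms(1)] by simp
  also have "\<dots> = (\<Sum>ns\<in>tuples_sum h (n*h). \<Sum>k=0..n*h. \<Sum>is\<in>tuples_sum h k. term46 h ns is)"
    by (rule sum.swap)
  also have "\<dots> = (\<Sum>ns\<in>tuples_sum h (n*h). infsum (term46 h ns) ({1..h} \<rightarrow>\<^sub>E (UNIV :: nat set)))"
    by (intro sum.cong refl infsum_term46[OF assms(1), symmetric])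
  finally show "of_nat (card (pos_meanders h n)) =
           (\<Sum>ns\<in>tuples_sum h (n*h). infsum (term46 h ns) ({1..h} \<rightarrow>\<^sub>E (UNIV :: nat set)))" .
qed


end
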